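(* Let $\{X_t\},\{Y_t\}$ ($t\in T$) be stochastic processes with finite second moments such that $X_t\le_{\textnormal{d-ast}}Y_t$ as $t\to\infty$. Let $\psi:\mathbb{R}\to\mathbb{R}$ be strictly increasing and Lipschitz continuous, with $\psi(X_t)$, $\psi(Y_t)$ having finite second moments for all $t$. If there exist $C>0$ and $t_0\in T$ with $\mathcal{W}_2^2(F_{X_t},F_{Y_t})\le C\,\mathcal{W}_2^2(F_{\psi(X_t)},F_{\psi(Y_t)})$ for all $t\ge t_0$, then $\psi(X_t)\le_{\textnormal{d-ast}}\psi(Y_t)$ as $t\to\infty$.
   Context: $T\subseteq\mathbb{R}$ is unbounded above; limits along $t\in T$. $F^{-1}(u)=\inf\{x:F(x)\ge u\}$. $\mathcal{W}_2(F,G)=(\int_0^1(F^{-1}-G^{-1})^2du)^{1/2}$. $\varepsilon_{\mathcal{W}_2}(F,G)=\mathcal{W}_2^{-2}(F,G)\int_{\{u\in(0,1):F^{-1}(u)>G^{-1}(u)\}}(F^{-1}-G^{-1})^2du$, set to $0$ if $\mathcal{W}_2(F,G)=0$. $X_t\le_{\textnormal{d-ast}}Y_t$ means $\lim_{t\to\infty}\varepsilon_{\mathcal{W}_2}(F_{X_t},F_{Y_t})=0$. *)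

theory Defs
  imports "HOL-Probability.Probability"
begin

definition dist_fun :: "'a measure \<Rightarrow> ('a \<Rightarrow> real) \<Rightarrow> real \<Rightarrow> real" where
  "dist_fun M X = (\<lambda>x. measure M {\<omega> \<in> space M. X \<omega> \<le> x})"

definition quantile :: "(real \<Rightarrow> real) \<Rightarrow> real \<Rightarrow> real" where
  "quantile F u = Inf {x. F x \<ge> u}"

definition W2sq :: "(real \<Rightarrow> real) \<Rightarrow> (real \<Rightarrow> real) \<Rightarrow> real" where
  "W2sq F G = (LBINT u:{0<..<1::real}. (quantile F u - quantile G u)\<^sup>2)"

definition eps_W2 :: "(real \<Rightarrow> real) \<Rightarrow> (real \<Rightarrow> real) \<Rightarrow> real" where
  "eps_W2 F G = (if W2sq F G = 0 then 0 else
     (LBINT u:{u\<in>{0<..<1::real}. quantile F u > quantile G u}. (quantile F u - quantile G u)\<^sup>2)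
       / W2sq F G)"

definition d_ast_le :: "real set \<Rightarrow> 'a measure \<Rightarrow> (real \<Rightarrow> 'a \<Rightarrow> real) \<Rightarrow> (real \<Rightarrow> 'a \<Rightarrow> real) \<Rightarrow> bool" where
  "d_ast_le T M X Y \<longleftrightarrow>
     ((\<lambda>t. eps_W2 (dist_fun M (X t)) (dist_fun M (Y t))) \<longlongrightarrow> 0) (at_top \<sqinter> principal T)"

end

theory Submission
  imports Defs
begin

definition Om :: "real measure" where "Om = restrict_space lborel {0<..<1}"

lemma dist_fun_cdf:
  assumes "Z \<in> borel_measurable M"
  shows "dist_fun M Z = cdf (distr M borel Z)"
  unfolding dist_fun_def cdf_def
  using assms by (intro ext) (simp add: measure_distr vimage_def Int_def conj_commute)

lemma quantile_facts:
  assumes P: "prob_space M" and Z: "Z \<in> borel_measurable M"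
  shows "quantile (dist_fun M Z) \<in> borel_measurable Om"
    and "\<And>u x. u \<in> {0<..<1} \<Longrightarrow> u \<le> dist_fun M Z x \<longleftrightarrow> quantile (dist_fun M Z) u \<le> x"
    and "distr Om borel (quantile (dist_fun M Z)) = distr M borel Z"
proof -
  interpret cdf_distribution "distr M borel Z"
    using prob_space.real_distribution_distr[OF P Z] by (simp add: cdf_distribution_def)
  have q: "quantile (dist_fun M Z) = I"
    unfolding quantile_def dist_fun_cdf[OF Z] by simp
  show "quantile (dist_fun M Z) \<in> borel_measurable Om"
    unfolding q Om_def using measurable_CI
    by (subst measurable_cong_sets[OF sets_restrict_space_cong[OF sets_lborel] refl])
  show "\<And>u x. u \<in> {0<..<1} \<Longrightarrow> u \<le> dist_fun M Z x \<longleftrightarrow> quantile (dist_fun M Z) u \<le> x"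
    unfolding quantile_def dist_fun_cdf[OF Z] by (rule pseudoinverse) auto
  show "distr Om borel (quantile (dist_fun M Z)) = distr M borel Z"
    unfolding q Om_def using distr_I_eq_M .
qed

lemma quantile_sq_integrable:
  assumes P: "prob_space M" and Z: "Z \<in> borel_measurable M" and I: "integrable M (\<lambda>\<omega>. (Z \<omega>)\<^sup>2)"
  shows "integrable Om (\<lambda>u. (quantile (dist_fun M Z) u)\<^sup>2)"
proof -
  have m: "quantile (dist_fun M Z) \<in> measurable Om borel"
    using quantile_facts(1)[OF P Z] by simp
  have "integrable (distr M borel Z) (\<lambda>x. x\<^sup>2)"
    using I Z by (subst integrable_distr_eq) auto
  then have "integrable (distr Om borel (quantile (dist_fun M Z))) (\<lambda>x. x\<^sup>2)"
    using quantile_facts(3)[OF P Z] by simp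
  then show ?thesis
    using m by (subst (asm) integrable_distr_eq) auto
qed

lemma quantile_comp:
  assumes P: "prob_space M" and Z: "Z \<in> borel_measurable M"
    and psi: "strict_mono \<psi>" "continuous_on UNIV \<psi>" and u: "u \<in> {0<..<1::real}"
  shows "quantile (dist_fun M (\<lambda>\<omega>. \<psi> (Z \<omega>))) u = \<psi> (quantile (dist_fun M Z) u)"
proof -
  interpret prob_space M by fact
  define q where "q = quantile (dist_fun M Z) u"
  have mZ: "\<And>x. {\<omega> \<in> space M. Z \<omega> \<le> x} \<in> sets M" using Z by measurable
  have mpsi: "\<psi> \<in> borel_measurable borel"
    using psi(2) by (rule borel_measurable_continuous_onI)
  have mP: "\<And>y. {\<omega> \<in> space M. \<psi> (Z \<omega>) \<le> y} \<in> sets M" using Z mpsi by measurable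
  have pi: "\<And>x. u \<le> dist_fun M Z x \<longleftrightarrow> q \<le> x"
    unfolding q_def using quantile_facts(2)[OF P Z u] .
  show ?thesis unfolding q_def[symmetric] quantile_def[of "dist_fun M (\<lambda>\<omega>. \<psi> (Z \<omega>))"]
  proof (rule cInf_eq_minimum)
    have "{\<omega> \<in> space M. \<psi> (Z \<omega>) \<le> \<psi> q} = {\<omega> \<in> space M. Z \<omega> \<le> q}"
      using psi(1) by (auto simp: strict_mono_less_eq)
    then show "\<psi> q \<in> {x. u \<le> dist_fun M (\<lambda>\<omega>. \<psi> (Z \<omega>)) x}"
      using pi[of q] by (simp add: dist_fun_def)
  next
    fix y assume "y \<in> {x. u \<le> dist_fun M (\<lambda>\<omega>. \<psi> (Z \<omega>)) x}"
    then have uy: "u \<le> dist_fun M (\<lambda>\<omega>. \<psi> (Z \<omega>)) y" by simp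
    show "\<psi> q \<le> y"
    proof (rule ccontr)
      assume "\<not> \<psi> q \<le> y"
      then have yl: "y < \<psi> q" by simp
      have "isCont \<psi> q" using psi(2) by (simp add: continuous_on_eq_continuous_at)
      then have "(\<psi> \<longlongrightarrow> \<psi> q) (at_left q)"
        by (simp add: isCont_def filterlim_at_split)
      then have "eventually (\<lambda>x. y < \<psi> x) (at_left q)"
        using yl by (rule order_tendstoD)
      moreover have "eventually (\<lambda>x. x < q) (at_left q)"
        using eventually_at_left_real[of "q - 1" q] by (rule eventually_mono) auto
      ultimately have "eventually (\<lambda>x. y < \<psi> x \<and> x < q) (at_left q)"
        by (rule eventually_conj)
      then obtain x where x: "y < \<psi> x" "x < q"
        using eventually_happens[of _ "at_left q"] by (auto simp: trivial_limit_at_left_real)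
      have sub: "{\<omega> \<in> space M. \<psi> (Z \<omega>) \<le> y} \<subseteq> {\<omega> \<in> space M. Z \<omega> \<le> x}"
      proof safe
        fix \<omega> assume "\<omega> \<in> space M" "\<psi> (Z \<omega>) \<le> y"
        then have "\<psi> (Z \<omega>) < \<psi> x" using x by simp
        then show "Z \<omega> \<le> x" using psi(1) by (simp add: strict_mono_less less_imp_le)
      qed
      have "dist_fun M (\<lambda>\<omega>. \<psi> (Z \<omega>)) y \<le> dist_fun M Z x"
        unfolding dist_fun_def using sub mZ by (intro finite_measure_mono) auto
      with uy have "u \<le> dist_fun M Z x" by simp
      with pi x(2) show False by simp
    qed
  qed
qed

lemma set_int_Om:
  fixes f :: "real \<Rightarrow> real"
  shows  "(LBINT u:{0<..<1::real}. f u) = integral\<^sup>L Om f"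
  unfolding set_lebesgue_integral_def Om_def
  using Bochner_Integration.integral_restrict_space[of "{0<..<1::real}" lborel f]
  by simp

lemma set_int_pos:
  fixes a b :: "real \<Rightarrow> real"
  shows  "(LBINT u:{u\<in>{0<..<1::real}. a u > b u}. (a u - b u)\<^sup>2) = integral\<^sup>L Om (\<lambda>u. (max (a u - b u) 0)\<^sup>2)"
  unfolding set_lebesgue_integral_def Om_def
  using Bochner_Integration.integral_restrict_space[of "{0<..<1::real}" lborel "\<lambda>u. (max (a u - b u) 0)\<^sup>2"]
  by (auto intro!: Bochner_Integration.integral_cong simp: indicator_def max_def)

lemma space_Om: "space Om = {0<..<1}"
  by (simp add: Om_def space_restrict_space)

lemma key:
  fixes F G FP GP :: "real \<Rightarrow> real" and \<psi> :: "real \<Rightarrow> real"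
  assumes ma: "quantile F \<in> borel_measurable Om" and mb: "quantile G \<in> borel_measurable Om"
    and ia: "integrable Om (\<lambda>u. (quantile F u)\<^sup>2)" and ib: "integrable Om (\<lambda>u. (quantile G u)\<^sup>2)"
    and eqA: "\<And>u. u \<in> {0<..<1} \<Longrightarrow> quantile FP u = \<psi> (quantile F u)"
    and eqB: "\<And>u. u \<in> {0<..<1} \<Longrightarrow> quantile GP u = \<psi> (quantile G u)"
    and mono: "mono \<psi>" and lip: "L-lipschitz_on UNIV \<psi>" and C: "C > 0"
    and W: "W2sq F G \<le> C * W2sq FP GP"
  shows "eps_W2 FP GP \<le> L\<^sup>2 * C * eps_W2 F G \<and> 0 \<le> eps_W2 FP GP"
proof -
  define a where "a = quantile F"
  define b where "b = quantile G"
  have L0: "0 \<le> L" using lip by (rule lipschitz_on_nonneg)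
  have cpsi: "continuous_on UNIV \<psi>" using lip by (rule lipschitz_on_continuous_on)
  have mpsi: "\<psi> \<in> borel_measurable borel"
    using cpsi by (rule borel_measurable_continuous_onI)
  note [measurable] = ma[folded a_def] mb[folded b_def] mpsi
  define WX where "WX = integral\<^sup>L Om (\<lambda>u. (a u - b u)\<^sup>2)"
  define NX where "NX = integral\<^sup>L Om (\<lambda>u. (max (a u - b u) 0)\<^sup>2)"
  define WP where "WP = integral\<^sup>L Om (\<lambda>u. (\<psi> (a u) - \<psi> (b u))\<^sup>2)"
  define NP where "NP = integral\<^sup>L Om (\<lambda>u. (max (\<psi> (a u) - \<psi> (b u)) 0)\<^sup>2)"
  have W2X: "W2sq F G = WX"
    unfolding W2sq_def set_int_Om WX_def a_def b_def ..
  have W2P: "W2sq FP GP = WP"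
    unfolding W2sq_def set_int_Om WP_def
    by (intro Bochner_Integration.integral_cong) (auto simp: space_Om eqA eqB a_def b_def)
  have eX: "eps_W2 F G = (if WX = 0 then 0 else NX / WX)"
    unfolding eps_W2_def W2X set_int_pos NX_def a_def b_def ..
  have eP: "eps_W2 FP GP = (if WP = 0 then 0 else NP / WP)"
    unfolding eps_W2_def W2P set_int_pos NP_def
    by (intro arg_cong2[where f="\<lambda>x y. if WP = 0 then 0 else x / y"] Bochner_Integration.integral_cong refl)
       (auto simp: space_Om eqA eqB a_def b_def)
  have ip: "integrable Om (\<lambda>u. (a u - b u)\<^sup>2)"
  proof (rule Bochner_Integration.integrable_bound)
    show "integrable Om (\<lambda>u. 2 * (a u)\<^sup>2 + 2 * (b u)\<^sup>2)"
      using ia ib unfolding a_def b_def by auto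
    show "(\<lambda>u. (a u - b u)\<^sup>2) \<in> borel_measurable Om" by measurable
    show "AE u in Om. norm ((a u - b u)\<^sup>2) \<le> norm (2 * (a u)\<^sup>2 + 2 * (b u)\<^sup>2)"
    proof (rule AE_I2)
      fix u
      have "0 \<le> (a u + b u)\<^sup>2" by simp
      then have "(a u - b u)\<^sup>2 \<le> 2 * (a u)\<^sup>2 + 2 * (b u)\<^sup>2"
        by (simp add: power2_eq_square algebra_simps)
      then show "norm ((a u - b u)\<^sup>2) \<le> norm (2 * (a u)\<^sup>2 + 2 * (b u)\<^sup>2)"
        by simp
    qed
  qed
  have pw1: "(max (a u - b u) 0)\<^sup>2 \<le> (a u - b u)\<^sup>2" for u
    by (auto simp: max_def)
  have inx: "integrable Om (\<lambda>u. (max (a u - b u) 0)\<^sup>2)"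
    by (rule Bochner_Integration.integrable_bound[OF ip]) (auto simp: pw1)
  have pw2: "(max (\<psi> (a u) - \<psi> (b u)) 0)\<^sup>2 \<le> L\<^sup>2 * (max (a u - b u) 0)\<^sup>2" for u
  proof -
    have "max (\<psi> (a u) - \<psi> (b u)) 0 \<le> L * max (a u - b u) 0"
    proof (cases "a u > b u")
      case True
      have "\<psi> (a u) - \<psi> (b u) \<le> dist (\<psi> (a u)) (\<psi> (b u))" by (simp add: dist_real_def)
      also have "\<dots> \<le> L * dist (a u) (b u)" using lip by (rule lipschitz_onD) auto
      finally show ?thesis using True L0 by (auto simp: dist_real_def max_def)
    next
      case False
      then have "\<psi> (a u) \<le> \<psi> (b u)" using mono by (simp add: monoD)
      then show ?thesis using L0 by auto
    qed
    then have "(max (\<psi> (a u) - \<psi> (b u)) 0)\<^sup>2 \<le> (L * max (a u - b u) 0)\<^sup>2"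
      by (intro power_mono) auto
    then show ?thesis by (simp add: power_mult_distrib)
  qed
  have inp: "integrable Om (\<lambda>u. (max (\<psi> (a u) - \<psi> (b u)) 0)\<^sup>2)"
    by (rule Bochner_Integration.integrable_bound[of _ "\<lambda>u. L\<^sup>2 * (max (a u - b u) 0)\<^sup>2"])
       (use inx pw2 in auto)
  have NPle: "NP \<le> L\<^sup>2 * NX"
    unfolding NP_def NX_def
    by (subst integral_mult_right_zero[symmetric]) (rule integral_mono[OF inp _ pw2], use inx in auto)
  have NXle: "NX \<le> WX"
    unfolding NX_def WX_def by (rule integral_mono[OF inx ip pw1])
  have NX0: "0 \<le> NX" unfolding NX_def by (rule Bochner_Integration.integral_nonneg) auto
  have NP0: "0 \<le> NP" unfolding NP_def by (rule Bochner_Integration.integral_nonneg) auto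
  have WP0: "0 \<le> WP" unfolding WP_def by (rule Bochner_Integration.integral_nonneg) auto
  have WXC: "WX \<le> C * WP" using W W2X W2P by simp
  have eX0: "0 \<le> eps_W2 F G" using NX0 NXle eX by auto
  have "eps_W2 FP GP \<le> L\<^sup>2 * C * eps_W2 F G"
  proof (cases "WP = 0")
    case True then show ?thesis using eP eX0 L0 C by simp
  next
    case False
    then have WPp: "0 < WP" using WP0 by simp
    show ?thesis
    proof (cases "WX = 0")
      case True
      then have "NX = 0" using NX0 NXle by simp
      then have "NP \<le> 0" using NPle by simp
      then have "NP / WP \<le> 0" using WPp by (simp add: divide_nonpos_pos)
      moreover have "0 \<le> L\<^sup>2 * C * eps_W2 F G" using eX0 C by simp
      ultimately show ?thesis using eP False by simp
    next
      case WX: False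
      then have WXp: "0 < WX" using NX0 NXle by linarith
      have "NP / WP \<le> L\<^sup>2 * NX / WP" using NPle WPp by (simp add: divide_right_mono)
      also have "\<dots> \<le> L\<^sup>2 * NX / (WX / C)"
        by (rule frac_le) (use NX0 WXp C WXC in \<open>auto simp: pos_divide_le_eq mult.commute\<close>)
      also have "\<dots> = L\<^sup>2 * C * (NX / WX)" using C by simp
      finally show ?thesis using eP eX False WX by simp
    qed
  qed
  moreover have "0 \<le> eps_W2 FP GP" using eP NP0 WP0 by simp
  ultimately show ?thesis by simp
qed

theorem theorem2p6:
  fixes T :: "real set" and M :: "'a measure"
    and X Y :: "real \<Rightarrow> 'a \<Rightarrow> real" and \<psi> :: "real \<Rightarrow> real"
  assumes "prob_space M"
    and "\<forall>b. \<exists>t\<in>T. t \<ge> b"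
    and "\<And>t. t \<in> T \<Longrightarrow> X t \<in> borel_measurable M"
    and "\<And>t. t \<in> T \<Longrightarrow> Y t \<in> borel_measurable M"
    and "\<And>t. t \<in> T \<Longrightarrow> integrable M (\<lambda>\<omega>. (X t \<omega>)\<^sup>2)"
    and "\<And>t. t \<in> T \<Longrightarrow> integrable M (\<lambda>\<omega>. (Y t \<omega>)\<^sup>2)"
    and "d_ast_le T M X Y"
    and "strict_mono \<psi>"
    and "\<exists>L. L-lipschitz_on UNIV \<psi>"
    and "\<And>t. t \<in> T \<Longrightarrow> integrable M (\<lambda>\<omega>. (\<psi> (X t \<omega>))\<^sup>2)"
    and "\<And>t. t \<in> T \<Longrightarrow> integrable M (\<lambda>\<omega>. (\<psi> (Y t \<omega>))\<^sup>2)"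
    and "\<exists>C>0. \<exists>t0\<in>T. \<forall>t\<in>T. t \<ge> t0 \<longrightarrow>
           W2sq (dist_fun M (X t)) (dist_fun M (Y t))
             \<le> C * W2sq (dist_fun M (\<lambda>\<omega>. \<psi> (X t \<omega>))) (dist_fun M (\<lambda>\<omega>. \<psi> (Y t \<omega>)))"
  shows "d_ast_le T M (\<lambda>t \<omega>. \<psi> (X t \<omega>)) (\<lambda>t \<omega>. \<psi> (Y t \<omega>))"
proof -
  note P = assms(1)
  obtain L where lip: "L-lipschitz_on UNIV \<psi>" using assms(9) by blast
  obtain C t0 where C: "C > 0" "t0 \<in> T" and CW: "\<forall>t\<in>T. t \<ge> t0 \<longrightarrow>
           W2sq (dist_fun M (X t)) (dist_fun M (Y t))
             \<le> C * W2sq (dist_fun M (\<lambda>\<omega>. \<psi> (X t \<omega>))) (dist_fun M (\<lambda>\<omega>. \<psi> (Y t \<omega>)))"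
    using assms(12) by blast
  have mono: "mono \<psi>" using assms(8) by (rule strict_mono_mono)
  have cpsi: "continuous_on UNIV \<psi>" using lip by (rule lipschitz_on_continuous_on)
  let ?F = "at_top \<sqinter> principal T"
  let ?eX = "\<lambda>t. eps_W2 (dist_fun M (X t)) (dist_fun M (Y t))"
  let ?eP = "\<lambda>t. eps_W2 (dist_fun M (\<lambda>\<omega>. \<psi> (X t \<omega>))) (dist_fun M (\<lambda>\<omega>. \<psi> (Y t \<omega>)))"
  have bound: "?eP t \<le> L\<^sup>2 * C * ?eX t \<and> 0 \<le> ?eP t" if t: "t \<in> T" "t \<ge> t0" for t
  proof (rule key)
    show "quantile (dist_fun M (X t)) \<in> borel_measurable Om"
      using quantile_facts(1)[OF P assms(3)[OF t(1)]] .
    show "quantile (dist_fun M (Y t)) \<in> borel_measurable Om"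
      using quantile_facts(1)[OF P assms(4)[OF t(1)]] .
    show "integrable Om (\<lambda>u. (quantile (dist_fun M (X t)) u)\<^sup>2)"
      using quantile_sq_integrable[OF P assms(3)[OF t(1)] assms(5)[OF t(1)]] .
    show "integrable Om (\<lambda>u. (quantile (dist_fun M (Y t)) u)\<^sup>2)"
      using quantile_sq_integrable[OF P assms(4)[OF t(1)] assms(6)[OF t(1)]] .
    show "\<And>u. u \<in> {0<..<1} \<Longrightarrow> quantile (dist_fun M (\<lambda>\<omega>. \<psi> (X t \<omega>))) u = \<psi> (quantile (dist_fun M (X t)) u)"
      using quantile_comp[OF P assms(3)[OF t(1)] assms(8) cpsi] .
    show "\<And>u. u \<in> {0<..<1} \<Longrightarrow> quantile (dist_fun M (\<lambda>\<omega>. \<psi> (Y t \<omega>))) u = \<psi> (quantile (dist_fun M (Y t)) u)"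
      using quantile_comp[OF P assms(4)[OF t(1)] assms(8) cpsi] .
    show "mono \<psi>" by fact
    show "L-lipschitz_on UNIV \<psi>" by fact
    show "C > 0" by fact
    show "W2sq (dist_fun M (X t)) (dist_fun M (Y t))
             \<le> C * W2sq (dist_fun M (\<lambda>\<omega>. \<psi> (X t \<omega>))) (dist_fun M (\<lambda>\<omega>. \<psi> (Y t \<omega>)))"
      using CW t by blast
  qed
  have ev: "eventually (\<lambda>t. t \<in> T \<and> t \<ge> t0) ?F"
    unfolding eventually_inf_principal
    by (rule eventually_mono[OF eventually_ge_at_top[of t0]]) auto
  have X0: "(?eX \<longlongrightarrow> 0) ?F" using assms(7) unfolding d_ast_le_def .
  have "((\<lambda>t. L\<^sup>2 * C * ?eX t) \<longlongrightarrow> 0) ?F"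
    using tendsto_mult_right_zero[OF X0, of "L\<^sup>2 * C"] by simp
  moreover have "eventually (\<lambda>t. 0 \<le> ?eP t) ?F"
    using ev by (rule eventually_mono) (use bound in blast)
  moreover have "eventually (\<lambda>t. ?eP t \<le> L\<^sup>2 * C * ?eX t) ?F"
    using ev by (rule eventually_mono) (use bound in blast)
  ultimately have "(?eP \<longlongrightarrow> 0) ?F"
    by (intro tendsto_sandwich[of "\<lambda>_. 0" ?eP ?F "\<lambda>t. L\<^sup>2 * C * ?eX t"]) auto
  then show ?thesis unfolding d_ast_le_def by simp
qed

end
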